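(* Fix a signal profile $\mathbf s$ and valuations $v_1,\dots,v_n$, and rename the bidders so that $v_1(\mathbf s)\ge v_2(\mathbf s)\ge\cdots\ge v_n(\mathbf s)$. Let $k=\max\{i: v_i(\mathbf s)>v_1(\mathbf s)/2\}$. Then for every $i\in[n]$, $$\mathbb E_{r,\pi}[c_i]\le\frac{1}{i(i+1)}+\frac{\log_2^\dagger\!\big(2v_i(\mathbf s)/\underline v_1^{(i)}(\mathbf s)\big)}{k+1}+\sum_{j\in[k]\setminus\{i\}}\frac{\log_2^\dagger\!\big(v_i(\mathbf s)/\underline v_j^{(i)}(\mathbf s)\big)}{j(j+1)}.$$
   Context: Single-item auction with $n$ bidders, signals $s_i\in S_i\subseteq\mathbb R$, valuations $v_i:\mathbf S\to\mathbb R_{>0}$, $\mathbf S=S_1\times\cdots\times S_n$. Lower estimates: $\underline v_j^{(i)}(\mathbf s)=\inf_{o_i\in S_i}v_j(o_i,\mathbf s_{-i})$ (for $j=i$ this is the infimum of bidder $i$'s own value over its own signal). $\log_2^\dagger(\alpha)=\max(0,\min(1,\log_2\alpha))$, with $a/0=\infty$ and $\log_2\infty=\infty$. For $r\in[0,1)$, $w>0$: $f_r(w)=2^{r+k'}$ for the integer $k'$ with $2^{r+k'}\le w<2^{r+k'+1}$; $f_r(0)=0$. For a permutation $\pi$ of $[n]$, $a$ associated with bidder $i$ and $b$ with bidder $j$: $a>_\pi b$ iff $a>b$, or $a=b$ and $\pi(i)>\pi(j)$. $c_i(r,\pi)=1$ iff $f_r(v_i(\mathbf s))>_\pi f_r(\underline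 v_j^{(i)}(\mathbf s))$ for all $j\ne i$, else $0$; $r\sim U[0,1)$ and $\pi$ uniformly random, independent. *)

theory Defs
  imports "HOL-Analysis.Analysis" "HOL-Combinatorics.Permutations"
begin

text \<open>Bidders are 1..n. A signal profile is a function nat => real; the signal
  space of bidder l is S l. A valuation profile is v :: nat => (nat => real) => real,
  v j t being bidder j's value at profile t.\<close>

definition lower_est :: "(nat \<Rightarrow> real set) \<Rightarrow> (nat \<Rightarrow> (nat \<Rightarrow> real) \<Rightarrow> real)
    \<Rightarrow> (nat \<Rightarrow> real) \<Rightarrow> nat \<Rightarrow> nat \<Rightarrow> real" where
  "lower_est S v s j i = (INF x\<in>S i. v j (s(i := x)))"

text \<open>log-dagger of the ratio a/b (a > 0, b >= 0), with a/0 = infinity and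
  log_2 infinity = infinity, so the value is 1 when b = 0.\<close>
definition logdag_ratio :: "real \<Rightarrow> real \<Rightarrow> real" where
  "logdag_ratio a b = (if b = 0 then 1 else max 0 (min 1 (log 2 (a / b))))"

definition f_r :: "real \<Rightarrow> real \<Rightarrow> real" where
  "f_r r w = (if w \<le> 0 then 0 else 2 powr (r + real_of_int \<lfloor>log 2 w - r\<rfloor>))"

definition gt_pi :: "(nat \<Rightarrow> nat) \<Rightarrow> real \<Rightarrow> nat \<Rightarrow> real \<Rightarrow> nat \<Rightarrow> bool" where
  "gt_pi \<pi> a i b j = (a > b \<or> (a = b \<and> \<pi> i > \<pi> j))"

definition c_win :: "nat \<Rightarrow> (nat \<Rightarrow> real set) \<Rightarrow> (nat \<Rightarrow> (nat \<Rightarrow> real) \<Rightarrow> real)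
    \<Rightarrow> (nat \<Rightarrow> real) \<Rightarrow> nat \<Rightarrow> real \<Rightarrow> (nat \<Rightarrow> nat) \<Rightarrow> bool" where
  "c_win n S v s i r \<pi> =
     (\<forall>j\<in>{1..n}. j \<noteq> i \<longrightarrow> gt_pi \<pi> (f_r r (v i s)) i (f_r r (lower_est S v s j i)) j)"

text \<open>E_{r,pi}[c_i] with r ~ U[0,1) and pi a uniformly random permutation of {1..n},
  independent.\<close>
definition expected_c :: "nat \<Rightarrow> (nat \<Rightarrow> real set) \<Rightarrow> (nat \<Rightarrow> (nat \<Rightarrow> real) \<Rightarrow> real)
    \<Rightarrow> (nat \<Rightarrow> real) \<Rightarrow> nat \<Rightarrow> real" where
  "expected_c n S v s i =
     (\<Sum>\<pi>\<in>{\<pi>. \<pi> permutes {1..n}}. measure lborel {r \<in> {0..<1}. c_win n S v s i r \<pi>})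
       / real (card {\<pi>. \<pi> permutes {1..n}})"

end

theory Submission imports Defs begin

lemma fr_meas[measurable]: "(\<lambda>r. f_r r w) \<in> borel_measurable borel"
  unfolding f_r_def by measurable

lemma fr_pos: "w > 0 \<Longrightarrow> f_r r w > 0"
  unfolding f_r_def by simp

lemma fr_less_iff:
  assumes "a > 0" "b > 0"
  shows "f_r r b < f_r r a \<longleftrightarrow> \<lfloor>log 2 b - r\<rfloor> < \<lfloor>log 2 a - r\<rfloor>"
  using assms unfolding f_r_def by simp

lemma fr_le_iff:
  assumes "a > 0" "b > 0"
  shows "f_r r b \<le> f_r r a \<longleftrightarrow> \<lfloor>log 2 b - r\<rfloor> \<le> \<lfloor>log 2 a - r\<rfloor>"
  using assms unfolding f_r_def by simp

lemma fr_mono: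
  assumes "0 \<le> b" "b \<le> a" "0 < a"
  shows "f_r r b \<le> f_r r a"
proof (cases "b = 0")
  case True
  then show ?thesis using fr_pos[OF assms(3), of r] by (simp add: f_r_def)
next
  case False
  then have "b > 0" using assms by simp
  moreover have "log 2 b \<le> log 2 a" using assms \<open>b>0\<close> by simp
  ultimately show ?thesis using assms by (simp add: fr_le_iff floor_mono)
qed

lemma fr_ge_iff:
  assumes "a > 0" "b \<ge> 0"
  shows "f_r r b \<le> f_r r a \<longleftrightarrow> f_r r b < f_r r (2*a)"
proof (cases "b = 0")
  case True
  then show ?thesis using fr_pos[OF assms(1), of r] fr_pos[of "2*a" r] assms by (simp add: f_r_def)
next
  case False
  then have b: "b > 0" using assms by simp
  have "log 2 (2*a) = 1 + log 2 a" using assms by (simp add: log_mult)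
  then have "\<lfloor>log 2 (2*a) - r\<rfloor> = \<lfloor>log 2 a - r\<rfloor> + 1"
    by (metis add.commute add_diff_eq floor_add_int of_int_1)
  then show ?thesis using assms b by (simp add: fr_le_iff fr_less_iff)
qed

lemma meas_le_Icc:
  fixes A :: "real set"
  assumes "A \<in> sets lborel" "A \<subseteq> B" "B \<in> sets lborel" "emeasure lborel B < \<infinity>"
  shows "measure lborel A \<le> measure lborel B"
  using assms by (intro measure_mono_fmeasurable) (auto intro: fmeasurableI)

lemma fin01:
  fixes A :: "real set"
  assumes "A \<subseteq> {0..1}"
  shows "emeasure lborel A < \<infinity>"
proof -
  have "emeasure lborel A \<le> emeasure lborel {0..1::real}"
    using assms by (intro emeasure_mono) auto
  also have "\<dots> < \<infinity>" by simp
  finally show ?thesis .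
qed

lemma sub_aux:
  fixes x y r :: real and m0 :: int
  assumes r: "0 \<le> r" "r < 1" and fl: "\<lfloor>y - r\<rfloor> < \<lfloor>x - r\<rfloor>"
    and fx: "real_of_int m0 \<le> x" "x < real_of_int m0 + 1"
  shows "r \<in> {max 0 ((x - m0)-(x-y))..(x-m0)} \<union> {min 1 ((x-m0)+1-(x-y))..1}"
proof -
  define m where "m = \<lfloor>x - r\<rfloor>"
  have m1: "real_of_int m \<le> x - r" "x - r < real_of_int m + 1"
    unfolding m_def by (rule of_int_floor_le, rule real_of_int_floor_add_one_gt)
  have "\<lfloor>y - r\<rfloor> + 1 \<le> m" using fl m_def by simp
  then have "real_of_int (\<lfloor>y - r\<rfloor> + 1) \<le> real_of_int m" by (simp only: of_int_le_iff)
  moreover have "y - r < real_of_int \<lfloor>y - r\<rfloor> + 1" by (rule real_of_int_floor_add_one_gt)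
  ultimately have m2: "y - r < real_of_int m" by linarith
  have "real_of_int m < real_of_int (m0 + 1)" using m1 fx r by simp
  then have i1: "m < m0 + 1" by (simp only: of_int_less_iff)
  have "real_of_int (m0 - 2) < real_of_int m" using m1 fx r by simp
  then have i2: "m0 - 2 < m" by (simp only: of_int_less_iff)
  from i1 i2 have "m = m0 \<or> m = m0 - 1" by presburger
  then show ?thesis
  proof
    assume "m = m0"
    then have mm: "real_of_int m = real_of_int m0" by simp
    have "r \<le> x - m0" "(x - m0) - (x - y) < r" using m1 m2 mm by linarith+
    then have "r \<in> {max 0 ((x - m0)-(x-y))..(x-m0)}" using r by simp
    then show ?thesis by (rule UnI1)
  next
    assume "m = m0 - 1"
    then have mm: "real_of_int m = real_of_int m0 - 1" by simp
    have "(x-m0)+1-(x-y) < r" using m2 mm by linarith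
    then have "r \<in> {min 1 ((x-m0)+1-(x-y))..1}" using r by simp
    then show ?thesis by (rule UnI2)
  qed
qed

lemma meas_fr_bound:
  assumes a: "a > 0" and b: "b \<ge> 0"
  shows "measure lborel {r \<in> {0..<1}. f_r r b < f_r r a} \<le> logdag_ratio a b"
proof -
  let ?A = "{r \<in> {0..<1::real}. f_r r b < f_r r a}"
  have Am: "?A \<in> sets lborel" by measurable
  have le1: "measure lborel ?A \<le> 1"
  proof -
    have "measure lborel ?A \<le> measure lborel {0..1::real}"
      by (rule meas_le_Icc[OF Am]) (auto simp: fin01)
    then show ?thesis by simp
  qed
  show ?thesis
  proof (cases "b = 0")
    case True then show ?thesis using le1 by (simp add: logdag_ratio_def)
  next
    case False
    then have bp: "b > 0" using b by simp
    show ?thesis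
    proof (cases "b < a")
      case False
      have "?A = {}"
      proof -
        have "f_r r a \<le> f_r r b" for r using fr_mono[of a b r] a False by simp
        then show ?thesis by (metis (no_types, lifting) Collect_empty_eq leD)
      qed
      then have "measure lborel ?A = 0" by (simp only: measure_empty)
      then show ?thesis by (simp add: logdag_ratio_def)
    next
      case True
      define x where "x = log 2 a"
      define y where "y = log 2 b"
      define d where "d = x - y"
      have dlog: "log 2 (a / b) = d" using a bp by (simp add: d_def x_def y_def log_divide)
      have dpos: "d > 0" using True a bp by (simp add: d_def x_def y_def)
      show ?thesis
      proof (cases "d \<ge> 1")
        case True then show ?thesis using le1 bp dlog by (simp add: logdag_ratio_def)
      next
        case False
        then have ld: "logdag_ratio a b = d" using bp dlog dpos by (simp add: logdag_ratio_def)
        define m0 where "m0 = \<lfloor>x\<rfloor>"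
        define c where "c = x - m0"
        have fx: "real_of_int m0 \<le> x" "x < real_of_int m0 + 1"
          unfolding m0_def by (rule of_int_floor_le, rule real_of_int_floor_add_one_gt)
        have c: "0 \<le> c" "c < 1" unfolding c_def using fx by linarith+
        have sub: "?A \<subseteq> {max 0 (c-d)..c} \<union> {min 1 (c+1-d)..1}"
        proof
          fix r assume "r \<in> ?A"
          then have r: "0 \<le> r" "r < 1" and fl0: "f_r r b < f_r r a" by auto
          have fl: "\<lfloor>y - r\<rfloor> < \<lfloor>x - r\<rfloor>"
            using fr_less_iff[OF a bp, of r] fl0 unfolding x_def y_def by blast
          show "r \<in> {max 0 (c-d)..c} \<union> {min 1 (c+1-d)..1}"
            unfolding c_def d_def by (rule sub_aux[OF r fl fx])
        qed
        have "measure lborel ?A \<le> measure lborel ({max 0 (c-d)..c} \<union> {min 1 (c+1-d)..1})"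
        proof (rule meas_le_Icc[OF Am sub])
          have U01: "{max 0 (c-d)..c} \<union> {min 1 (c+1-d)..1} \<subseteq> {0..1}" using c dpos False by auto
          show "emeasure lborel ({max 0 (c-d)..c} \<union> {min 1 (c+1-d)..1}) < \<infinity>" by (rule fin01[OF U01])
        qed auto
        also have "\<dots> \<le> measure lborel {max 0 (c-d)..c} + measure lborel {min 1 (c+1-d)..1}"
          by (rule measure_subadditive) (auto simp: emeasure_lborel_Icc_eq)
        also have "\<dots> = (c - max 0 (c-d)) + (1 - min 1 (c+1-d))"
          using c dpos by simp
        also have "\<dots> = d"
        proof (cases "d \<le> c")
          case True
          then have "max 0 (c-d) = c - d" "min 1 (c+1-d) = 1" by auto
          then show ?thesis by simp
        next
          case False
          then have "max 0 (c-d) = 0" "min 1 (c+1-d) = c+1-d" using c dpos by auto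
          then show ?thesis by simp
        qed
        finally show ?thesis using ld by simp
      qed
    qed
  qed
qed

lemma harm_aux: "0 \<le> c \<Longrightarrow> c \<le> (q::real) \<Longrightarrow> 1/((q+1) - (c+1) + 1) - 1/((q+1)+1) = 1/((q+1)*((q+1)+1)) + (1/(q - c + 1) - 1/(q+1))"
proof -
  assume h: "0 \<le> c" "c \<le> q"
  have p: "q - c + 1 > 0" "q + 1 > 0" "q + 2 > 0" using h by auto
  have e: "(q+1) - (c+1) + 1 = q - c + 1" "(q+1)+1 = q+2" by auto
  have f: "1/((q+1)*(q+2)) = 1/(q+1) - 1/(q+2)" using p by (simp add: field_simps)
  show ?thesis unfolding e using f by linarith
qed

lemma harm:
  "H \<subseteq> {1..k} \<Longrightarrow> 1/(real k - real (card H) + 1) - 1/(real k + 1) \<le> (\<Sum>j\<in>H. 1/(real j*(real j+1)))"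
proof (induction k arbitrary: H)
  case 0
  then show ?case by simp
next
  case (Suc k)
  have fin: "finite H" using Suc.prems finite_subset by blast
  have cle: "card H \<le> Suc k" using card_mono[OF _ Suc.prems] by simp
  show ?case
  proof (cases "Suc k \<in> H")
    case True
    define H' where "H' = H - {Suc k}"
    have H': "H' \<subseteq> {1..k}" using Suc.prems by (auto simp: H'_def)
    have cH: "card H = Suc (card H')" using card_Suc_Diff1[OF fin True] unfolding H'_def by metis
    have sH: "(\<Sum>j\<in>H. 1/(real j*(real j+1))) = 1/(real (Suc k)*(real (Suc k)+1)) + (\<Sum>j\<in>H'. 1/(real j*(real j+1)))"
      using True fin by (simp add: H'_def sum.remove)
    have ih: "1/(real k - real (card H') + 1) - 1/(real k + 1) \<le> (\<Sum>j\<in>H'. 1/(real j*(real j+1)))"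
      using Suc.IH[OF H'] .
    have "1/(real (Suc k) - real (card H) + 1) - 1/(real (Suc k) + 1)
        = 1/(real (Suc k)*(real (Suc k)+1)) + (1/(real k - real (card H') + 1) - 1/(real k + 1))"
    proof -
      have ck': "card H' \<le> k" using card_mono[OF _ H'] by simp
      have "1/((real k+1) - (real (card H')+1) + 1) - 1/((real k+1)+1) = 1/((real k+1)*((real k+1)+1)) + (1/(real k - real (card H') + 1) - 1/(real k+1))"
        by (rule harm_aux) (use ck' in auto)
      then show ?thesis using cH by (simp add: add.commute)
    qed
    then show ?thesis using sH ih by linarith
  next
    case False
    then have H: "H \<subseteq> {1..k}" using Suc.prems by (auto simp: subset_iff) (metis atLeastAtMost_iff le_SucE)
    have ck: "card H \<le> k" using card_mono[OF _ H] by simp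
    define m where "m = real k - real (card H) + 1"
    have m: "m \<ge> 1" "m \<le> real k + 1" using ck by (auto simp: m_def)
    have "1/(m+1) - 1/(real k + 2) \<le> 1/m - 1/(real k + 1)"
    proof -
      have "1/(m+1) - 1/m = -1/(m*(m+1))" using m by (simp add: field_simps)
      moreover have "1/(real k + 2) - 1/(real k + 1) = -1/((real k + 1)*(real k+2))" by (simp add: field_simps)
      moreover have "m*(m+1) \<le> (real k + 1)*(real k+2)" using m by (intro mult_mono) auto
      then have "1/((real k + 1)*(real k+2)) \<le> 1/(m*(m+1))" using m by (intro divide_left_mono) auto
      ultimately show ?thesis by linarith
    qed
    moreover have "1/m - 1/(real k + 1) \<le> (\<Sum>j\<in>H. 1/(real j*(real j+1)))"
      using Suc.IH[OF H] by (simp add: m_def)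
    ultimately have fin: "1/(m+1) - 1/(real k + 2) \<le> (\<Sum>j\<in>H. 1/(real j*(real j+1)))" by linarith
    have e1: "real (Suc k) - real (card H) + 1 = m + 1" by (simp add: m_def)
    have e2: "real (Suc k) + 1 = real k + 2" by simp
    show ?thesis unfolding e1 e2 by (rule fin)
  qed
qed

lemma perm_count:
  fixes n :: nat and U :: "nat set"
  assumes U: "U \<subseteq> {1..n}" and iU: "i \<in> U"
  shows "real (card {\<pi>::nat\<Rightarrow>nat. \<pi> permutes {1..n} \<and> (\<forall>j\<in>U-{i}. \<pi> j < \<pi> i)}) * real (card U)
          \<le> real (card {\<pi>::nat\<Rightarrow>nat. \<pi> permutes {1..n}})"
proof -
  define E where "E t = {\<pi>::nat\<Rightarrow>nat. \<pi> permutes {1..n} \<and> (\<forall>j\<in>U-{t}. \<pi> j < \<pi> t)}" for t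
  have finU: "finite U" using U by (rule finite_subset) simp
  have finP: "finite {\<pi>. \<pi> permutes {1..n::nat}}" by (rule finite_permutations) simp
  have finE: "finite (E t)" for t using finP by (rule finite_subset[rotated]) (auto simp: E_def)
  have cle: "card (E i) \<le> card (E t)" if t: "t \<in> U" for t
  proof (rule card_inj_on_le[where f = "\<lambda>\<pi>. \<pi> \<circ> Transposition.transpose i t"])
    show "inj_on (\<lambda>\<pi>. \<pi> \<circ> Transposition.transpose i t) (E i)"
    proof (rule inj_onI)
      fix p q assume "p \<circ> Transposition.transpose i t = q \<circ> Transposition.transpose i t"
      then have "p \<circ> Transposition.transpose i t \<circ> Transposition.transpose i t = q \<circ> Transposition.transpose i t \<circ> Transposition.transpose i t" by simp
      then show "p = q" by (metis comp_id transpose_comp_involutory comp_assoc)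
    qed
    show "(\<lambda>\<pi>. \<pi> \<circ> Transposition.transpose i t) ` E i \<subseteq> E t"
    proof
      fix x assume "x \<in> (\<lambda>\<pi>. \<pi> \<circ> Transposition.transpose i t) ` E i"
      then obtain p where p: "p \<in> E i" and x: "x = p \<circ> Transposition.transpose i t" by blast
      have pp: "p permutes {1..n}" and pl: "\<forall>j\<in>U-{i}. p j < p i" using p by (auto simp: E_def)
      have "x permutes {1..n}" unfolding x
        by (rule permutes_compose[OF permutes_swap_id pp]) (use U iU t in auto)
      moreover have "\<forall>j\<in>U-{t}. x j < x t"
      proof
        fix j assume j: "j \<in> U - {t}"
        have xe: "\<And>z. x z = p (Transposition.transpose i t z)" by (simp add: x)
        have xt: "x t = p i" using xe by simp
        show "x j < x t"
        proof (cases "j = i")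
          case True
          then have "t \<noteq> i" using j by auto
          then have "t \<in> U - {i}" using t by auto
          then have "p t < p i" using pl by blast
          moreover have "x i = p t" using xe by simp
          ultimately show ?thesis using True xt by simp
        next
          case False
          then have "x j = p j" using xe j by simp
          moreover have "j \<in> U - {i}" using j False by auto
          ultimately show ?thesis using pl xt by simp
        qed
      qed
      ultimately show "x \<in> E t" by (simp add: E_def)
    qed
    show "finite (E t)" by (rule finE)
  qed
  have disj: "E s \<inter> E t = {}" if "s \<in> U" "t \<in> U" "s \<noteq> t" for s t
  proof -
    { fix p assume p: "p \<in> E s" "p \<in> E t"
      have "t \<in> U - {s}" "s \<in> U - {t}" using that by auto
      then have "p t < p s" "p s < p t" using p by (auto simp: E_def)
      then have False by simp }
    then show ?thesis by blast
  qed
  have "real (card (E i)) * real (card U) = (\<Sum>t\<in>U. real (card (E i)))" by simp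
  also have "\<dots> \<le> (\<Sum>t\<in>U. real (card (E t)))" using cle by (intro sum_mono) auto
  also have "\<dots> = real (card (\<Union>t\<in>U. E t))"
    using finU finE disj by (subst card_UN_disjoint) auto
  also have "\<dots> \<le> real (card {\<pi>. \<pi> permutes {1..n}})"
    using finP by (intro of_nat_mono card_mono) (auto simp: E_def)
  finally show ?thesis by (simp add: E_def)
qed


theorem mainTheorem10:
  fixes n :: nat and S :: "nat \<Rightarrow> real set"
    and v :: "nat \<Rightarrow> (nat \<Rightarrow> real) \<Rightarrow> real" and s :: "nat \<Rightarrow> real"
  assumes S_ne: "\<forall>l\<in>{1..n}. S l \<noteq> {}"
    and s_in: "\<forall>l\<in>{1..n}. s l \<in> S l"
    and v_pos: "\<forall>j\<in>{1..n}. \<forall>t. (\<forall>l\<in>{1..n}. t l \<in> S l) \<longrightarrow> v j t > 0"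
    and sorted: "\<forall>a\<in>{1..n}. \<forall>b\<in>{1..n}. a \<le> b \<longrightarrow> v b s \<le> v a s"
    and i_in: "i \<in> {1..n}"
  defines "k \<equiv> Max {l\<in>{1..n}. v l s > v 1 s / 2}"
  shows "expected_c n S v s i \<le>
           1 / (real i * (real i + 1))
         + logdag_ratio (2 * v i s) (lower_est S v s 1 i) / (real k + 1)
         + (\<Sum>j\<in>{1..k} - {i}. logdag_ratio (v i s) (lower_est S v s j i) / (real j * (real j + 1)))"
proof -
  have n1: "1 \<le> n" using i_in by simp
  define a where "a = v i s"
  define b where "b j = lower_est S v s j i" for j
  have apos: "a > 0" using v_pos i_in s_in by (auto simp: a_def)
  have bprop: "0 \<le> b j \<and> b j \<le> v j s" if j: "j \<in> {1..n}" for j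
  proof -
    have pos: "v j (s(i:=x)) > 0" if x: "x \<in> S i" for x
    proof -
      have "\<forall>l\<in>{1..n}. (s(i:=x)) l \<in> S l" using s_in x by auto
      then show ?thesis using v_pos j by blast
    qed
    have ne: "S i \<noteq> {}" using S_ne i_in by auto
    have bdd: "bdd_below ((\<lambda>x. v j (s(i:=x))) ` S i)"
      using pos by (intro bdd_belowI[of _ 0]) (auto intro: less_imp_le)
    have "0 \<le> b j" unfolding b_def lower_est_def using ne pos
      by (intro cINF_greatest) (auto intro: less_imp_le)
    moreover have "b j \<le> v j (s(i := s i))" unfolding b_def lower_est_def
      using bdd s_in i_in by (intro cINF_lower) auto
    ultimately show ?thesis by simp
  qed
  define L where "L = {l\<in>{1..n}. v l s > v 1 s / 2}"
  have v1: "v 1 s > 0" using v_pos s_in n1 by auto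
  have L1: "1 \<in> L" using v1 n1 by (auto simp: L_def)
  have finL: "finite L" by (simp add: L_def)
  have kn: "k \<le> n" unfolding k_def L_def[symmetric]
    using finL L1 by (subst Max_le_iff) (auto simp: L_def)
  define K where "K = {1..k} - {i}"
  have KS: "K \<subseteq> {1..n}" using kn by (auto simp: K_def)
  have finK: "finite K" by (simp add: K_def)
  define A where "A j = {r \<in> {0..<1::real}. f_r r (b j) < f_r r a}" for j
  define Y where "Y = {r \<in> {0..<1::real}. f_r r (b 1) < f_r r (2*a)}"
  define w where "w j = 1/(real j * (real j + 1))" for j :: nat
  define c0 where "c0 = 1/(real i * (real i + 1))"
  define P where "P = {\<pi>. \<pi> permutes {1..n}}"
  define N where "N = real (card P)"
  define C where "C \<pi> = {r \<in> {0..<1::real}. c_win n S v s i r \<pi>}" for \<pi>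
  have finP: "finite P" unfolding P_def by (rule finite_permutations) simp
  have Npos: "N > 0"
  proof -
    have "id \<in> P" by (simp add: P_def permutes_id)
    then show ?thesis using finP by (auto simp: N_def card_gt_0_iff)
  qed
  have w0: "w j \<ge> 0" for j by (simp add: w_def)
  have c00: "c0 \<ge> 0" by (simp add: c0_def)
  have Am: "A j \<in> sets lborel" for j unfolding A_def by measurable
  have Ym: "Y \<in> sets lborel" unfolding Y_def by measurable
  have Cm: "C p \<in> sets lborel" for p unfolding C_def c_win_def gt_pi_def by measurable
  have intI: "integrable lborel (indicator X :: real \<Rightarrow> real)" if "X \<in> sets lborel" "X \<subseteq> {0..1}" for X
    using that fin01[OF that(2)] by (simp add: integrable_indicator_iff)
  have intA: "integrable lborel (indicator (A j) :: real \<Rightarrow> real)" for j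
    by (rule intI[OF Am]) (auto simp: A_def)
  have intY: "integrable lborel (indicator Y :: real \<Rightarrow> real)"
    by (rule intI[OF Ym]) (auto simp: Y_def)
  have intC: "integrable lborel (indicator (C p) :: real \<Rightarrow> real)" for p
    by (rule intI[OF Cm]) (auto simp: C_def)
  have int01: "integrable lborel (indicator {0..<1::real} :: real \<Rightarrow> real)"
    by (rule intI) auto
  have mA: "measure lborel (A j) \<le> logdag_ratio a (b j)" if "j \<in> K" for j
    unfolding A_def using meas_fr_bound[OF apos, of "b j"] bprop[of j] KS that by auto
  have mY: "measure lborel Y \<le> logdag_ratio (2*a) (b 1)"
    unfolding Y_def using meas_fr_bound[of "2*a" "b 1"] apos bprop[of 1] n1 by auto

  define g where "g r = N * (c0 * indicator {0..<1} r + indicator Y r / (real k + 1)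
                   + (\<Sum>j\<in>K. w j * indicator (A j) r))" for r :: real
  have g0: "g r \<ge> 0" for r
    unfolding g_def using Npos c00 w0
    by (intro mult_nonneg_nonneg add_nonneg_nonneg sum_nonneg divide_nonneg_nonneg) auto

  have point: "(\<Sum>p\<in>P. indicator (C p) r) \<le> g r" for r :: real
  proof (cases "r \<in> {0..<1} \<and> r \<in> Y")
    case False
    have "indicator (C p) r = (0::real)" for p
    proof -
      have "r \<notin> C p"
      proof
        assume rC: "r \<in> C p"
        then have r01: "r \<in> {0..<1}" and cw: "c_win n S v s i r p" by (auto simp: C_def)
        have le: "f_r r (b 1) \<le> f_r r a"
        proof (cases "i = 1")
          case True
          then show ?thesis using fr_mono[of "b 1" a r] bprop[of 1] n1 apos by (simp add: a_def)
        next
          case False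
          then have "gt_pi p (f_r r (v i s)) i (f_r r (lower_est S v s 1 i)) 1"
            using cw n1 by (auto simp: c_win_def)
          then show ?thesis by (auto simp: gt_pi_def a_def b_def)
        qed
        then have "r \<in> Y" using fr_ge_iff[OF apos, of "b 1" r] bprop[of 1] n1 r01 by (auto simp: Y_def)
        then show False using False r01 by auto
      qed
      then show ?thesis by simp
    qed
    then have "(\<Sum>p\<in>P. indicator (C p) r) = (0::real)" by simp
    then show ?thesis using g0[of r] by simp
  next
    case True
    then have r01: "r \<in> {0..<1}" and rY: "r \<in> Y" by auto
    define G where "G = {j\<in>K. r \<in> A j}"
    define U where "U = insert i (K - G)"
    define E where "E = {p. p permutes {1..n} \<and> (\<forall>j\<in>U-{i}. p j < p i)}"
    have US: "U \<subseteq> {1..n}" using KS i_in by (auto simp: U_def)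
    have GK: "G \<subseteq> K" by (auto simp: G_def)
    have finG: "finite G" by (rule finite_subset[OF GK finK])
    have "(\<Sum>p\<in>P. indicator (C p) r) = (\<Sum>p\<in>P. if c_win n S v s i r p then 1 else (0::real))"
      using r01 by (intro sum.cong) (auto simp: C_def indicator_def)
    also have "\<dots> = (\<Sum>p\<in>{p\<in>P. c_win n S v s i r p}. 1)"
      using sum.inter_filter[OF finP, of "\<lambda>_. (1::real)" "c_win n S v s i r", symmetric] by simp
    also have "\<dots> = real (card {p\<in>P. c_win n S v s i r p})" by simp
    finally have s1: "(\<Sum>p\<in>P. indicator (C p) r) = real (card {p\<in>P. c_win n S v s i r p})" .
    have cardle: "card {p\<in>P. c_win n S v s i r p} \<le> card E"
    proof (rule card_mono)
      show "finite E" using finP by (rule finite_subset[rotated]) (auto simp: E_def P_def)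
      show "{p\<in>P. c_win n S v s i r p} \<subseteq> E"
      proof
        fix p assume "p \<in> {p\<in>P. c_win n S v s i r p}"
        then have pP: "p permutes {1..n}" and cw: "c_win n S v s i r p" by (auto simp: P_def)
        have "p j < p i" if j: "j \<in> U - {i}" for j
        proof -
          have jK: "j \<in> K" and jG: "j \<notin> G" and ji: "j \<noteq> i" using j by (auto simp: U_def)
          have jn: "j \<in> {1..n}" using jK KS by auto
          have nA: "\<not> f_r r (b j) < f_r r a" using jG jK r01 by (auto simp: G_def A_def)
          have "gt_pi p (f_r r (v i s)) i (f_r r (lower_est S v s j i)) j"
            using cw jn ji by (auto simp: c_win_def)
          then show ?thesis using nA by (auto simp: gt_pi_def a_def b_def)
        qed
        then show "p \<in> E" using pP by (auto simp: E_def)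
      qed
    qed
    have pc: "real (card E) * real (card U) \<le> N"
    proof -
      have iU: "i \<in> U" by (simp add: U_def)
      show ?thesis using perm_count[OF US iU] by (simp only: E_def N_def P_def)
    qed
    define H where "H = G \<union> ({i} \<inter> {1..k})"
    have HS: "H \<subseteq> {1..k}" using GK by (auto simp: H_def K_def)
    have iG: "i \<notin> G" using GK by (auto simp: K_def)
    define \<delta> where "\<delta> = (if i \<in> {1..k} then 1 else 0::nat)"
    have cK: "card K + \<delta> = k"
    proof (cases "i \<in> {1..k}")
      case True
      then have "card K = k - 1" by (simp add: K_def)
      then show ?thesis using True by (simp add: \<delta>_def)
    next
      case False
      then have "K = {1..k}" by (auto simp: K_def)
      then show ?thesis using False by (simp add: \<delta>_def)
    qed
    have cH: "card H = card G + \<delta>"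
    proof (cases "i \<in> {1..k}")
      case True
      then have "H = insert i G" by (auto simp: H_def)
      then show ?thesis using True iG finG by (simp add: \<delta>_def)
    next
      case False
      then have "H = G" by (auto simp: H_def)
      then show ?thesis using False by (simp add: \<delta>_def)
    qed
    have cKG: "card (K - G) + card G = card K"
      using GK finK card_Diff_subset[OF finG GK] card_mono[OF finK GK] by simp
    have cU: "card U = Suc (card (K - G))"
      using finK by (simp add: U_def K_def)
    have cUH: "card U + card H = k + 1" using cU cH cKG cK by simp
    then have "real (card U) + real (card H) = real k + 1"
      by (metis of_nat_1 of_nat_add)
    then have rU: "real (card U) = real k - real (card H) + 1" by linarith
    have Upos: "real (card U) > 0" using cU by simp
    have sH: "(\<Sum>j\<in>H. w j) \<le> c0 + (\<Sum>j\<in>G. w j)"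
    proof (cases "i \<in> {1..k}")
      case True
      then have "H = insert i G" by (auto simp: H_def)
      then have "(\<Sum>j\<in>H. w j) = w i + (\<Sum>j\<in>G. w j)" using iG finG by simp
      then show ?thesis by (simp add: w_def c0_def)
    next
      case False
      then have "H = G" by (auto simp: H_def)
      then show ?thesis using c00 by simp
    qed
    have sG: "(\<Sum>j\<in>G. w j) = (\<Sum>j\<in>K. w j * indicator (A j) r)"
    proof -
      have "(\<Sum>j\<in>K. w j * indicator (A j) r) = (\<Sum>j\<in>K. if r \<in> A j then w j else 0)"
        by (intro sum.cong) (auto simp: indicator_def)
      also have "\<dots> = (\<Sum>j\<in>G. w j)" using sum.inter_filter[OF finK, of w "\<lambda>j. r \<in> A j"] by (simp add: G_def)
      finally show ?thesis by simp
    qed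
    have hm: "1 / real (card U) - 1/(real k + 1) \<le> (\<Sum>j\<in>H. w j)"
      using harm[OF HS] by (simp add: rU w_def)
    have "real (card {p\<in>P. c_win n S v s i r p}) \<le> real (card E)" using cardle by simp
    also have "\<dots> \<le> N / real (card U)" using pc Upos by (simp add: field_simps)
    also have "\<dots> = N * (1 / real (card U))" by simp
    also have "\<dots> \<le> N * (c0 + 1/(real k + 1) + (\<Sum>j\<in>K. w j * indicator (A j) r))"
      using hm sH sG Npos by (intro mult_left_mono) auto
    also have "\<dots> = g r" using r01 rY by (simp add: g_def)
    finally show ?thesis using s1 by simp
  qed

  have i1: "integrable lborel (\<lambda>r. c0 * indicator {0..<1::real} r :: real)"
    by (rule Bochner_Integration.integrable_mult_right) (rule int01)
  have i2: "integrable lborel (\<lambda>r. indicator Y r / (real k + 1) :: real)"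
    by (rule Bochner_Integration.integrable_divide_zero) (rule intY)
  have i3: "integrable lborel (\<lambda>r. \<Sum>j\<in>K. w j * indicator (A j) r :: real)"
    by (rule Bochner_Integration.integrable_sum, rule Bochner_Integration.integrable_mult_right, rule intA)
  have i12: "integrable lborel (\<lambda>r. c0 * indicator {0..<1::real} r + indicator Y r / (real k + 1) :: real)"
    by (rule Bochner_Integration.integrable_add[OF i1 i2])
  have i123: "integrable lborel (\<lambda>r. c0 * indicator {0..<1::real} r + indicator Y r / (real k + 1)
                   + (\<Sum>j\<in>K. w j * indicator (A j) r) :: real)"
    by (rule Bochner_Integration.integrable_add[OF i12 i3])
  have ig: "integrable lborel g" unfolding g_def
    by (rule Bochner_Integration.integrable_mult_right) (rule i123)
  have isum: "integrable lborel (\<lambda>r. \<Sum>p\<in>P. indicator (C p) r :: real)"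
    by (rule Bochner_Integration.integrable_sum) (rule intC)
  have "(\<Sum>p\<in>P. measure lborel (C p)) = (\<Sum>p\<in>P. integral\<^sup>L lborel (indicator (C p) :: real \<Rightarrow> real))"
    by simp
  also have "\<dots> = integral\<^sup>L lborel (\<lambda>r. \<Sum>p\<in>P. indicator (C p) r :: real)"
    by (rule Bochner_Integration.integral_sum[symmetric]) (rule intC)
  also have "\<dots> \<le> integral\<^sup>L lborel g"
    by (rule Bochner_Integration.integral_mono[OF isum ig]) (rule point)
  also have "integral\<^sup>L lborel g = N * (c0 * measure lborel {0..<1::real} + measure lborel Y / (real k + 1)
                   + (\<Sum>j\<in>K. w j * measure lborel (A j)))"
  proof -
    have "integral\<^sup>L lborel g = N * integral\<^sup>L lborel (\<lambda>r. c0 * indicator {0..<1} r + indicator Y r / (real k + 1)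
                   + (\<Sum>j\<in>K. w j * indicator (A j) r))"
      unfolding g_def by (rule Bochner_Integration.integral_mult_right_zero)
    also have "integral\<^sup>L lborel (\<lambda>r. c0 * indicator {0..<1} r + indicator Y r / (real k + 1)
                   + (\<Sum>j\<in>K. w j * indicator (A j) r))
        = integral\<^sup>L lborel (\<lambda>r. c0 * indicator {0..<1::real} r + indicator Y r / (real k + 1) :: real)
         + integral\<^sup>L lborel (\<lambda>r. \<Sum>j\<in>K. w j * indicator (A j) r :: real)"
      by (rule Bochner_Integration.integral_add[OF i12 i3])
    also have "integral\<^sup>L lborel (\<lambda>r. c0 * indicator {0..<1::real} r + indicator Y r / (real k + 1) :: real)
       = integral\<^sup>L lborel (\<lambda>r. c0 * indicator {0..<1::real} r :: real) + integral\<^sup>L lborel (\<lambda>r. indicator Y r / (real k + 1) :: real)"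
      by (rule Bochner_Integration.integral_add[OF i1 i2])
    also have "integral\<^sup>L lborel (\<lambda>r. c0 * indicator {0..<1::real} r :: real) = c0 * measure lborel {0..<1::real}"
      by simp
    also have "integral\<^sup>L lborel (\<lambda>r. indicator Y r / (real k + 1) :: real) = measure lborel Y / (real k + 1)"
      by simp
    also have "integral\<^sup>L lborel (\<lambda>r. \<Sum>j\<in>K. w j * indicator (A j) r :: real) = (\<Sum>j\<in>K. w j * measure lborel (A j))"
    proof -
      have "integral\<^sup>L lborel (\<lambda>r. \<Sum>j\<in>K. w j * indicator (A j) r :: real) = (\<Sum>j\<in>K. integral\<^sup>L lborel (\<lambda>r. w j * indicator (A j) r :: real))"
        by (rule Bochner_Integration.integral_sum) (rule Bochner_Integration.integrable_mult_right, rule intA)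
      also have "\<dots> = (\<Sum>j\<in>K. w j * measure lborel (A j))" by simp
      finally show ?thesis .
    qed
    finally show ?thesis .
  qed
  also have "\<dots> \<le> N * (c0 + logdag_ratio (2*a) (b 1) / (real k + 1) + (\<Sum>j\<in>K. w j * logdag_ratio a (b j)))"
  proof -
    have "measure lborel Y / (real k + 1) \<le> logdag_ratio (2*a) (b 1) / (real k + 1)"
      using mY by (intro divide_right_mono) auto
    moreover have "(\<Sum>j\<in>K. w j * measure lborel (A j)) \<le> (\<Sum>j\<in>K. w j * logdag_ratio a (b j))"
      using mA w0 by (intro sum_mono mult_left_mono) auto
    ultimately show ?thesis using Npos by (intro mult_left_mono) auto
  qed
  finally have main: "(\<Sum>p\<in>P. measure lborel (C p)) \<le> N * (c0 + logdag_ratio (2*a) (b 1) / (real k + 1) + (\<Sum>j\<in>K. w j * logdag_ratio a (b j)))" .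
  have ex: "expected_c n S v s i = (\<Sum>p\<in>P. measure lborel (C p)) / N"
    by (simp add: expected_c_def P_def C_def N_def)
  have sumeq: "(\<Sum>j\<in>K. w j * logdag_ratio a (b j))
      = (\<Sum>j\<in>{1..k} - {i}. logdag_ratio (v i s) (lower_est S v s j i) / (real j * (real j + 1)))"
    unfolding K_def by (intro sum.cong refl) (simp add: w_def a_def b_def)
  have rhs: "c0 + logdag_ratio (2*a) (b 1) / (real k + 1) + (\<Sum>j\<in>K. w j * logdag_ratio a (b j))
      = 1 / (real i * (real i + 1))
         + logdag_ratio (2 * v i s) (lower_est S v s 1 i) / (real k + 1)
         + (\<Sum>j\<in>{1..k} - {i}. logdag_ratio (v i s) (lower_est S v s j i) / (real j * (real j + 1)))"
    unfolding sumeq by (simp only: c0_def a_def b_def)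
  define R where "R = c0 + logdag_ratio (2*a) (b 1) / (real k + 1) + (\<Sum>j\<in>K. w j * logdag_ratio a (b j))"
  have "(\<Sum>p\<in>P. measure lborel (C p)) / N \<le> (N * R) / N"
    using main Npos unfolding R_def by (intro divide_right_mono) auto
  also have "(N * R) / N = R" using Npos by simp
  finally show ?thesis unfolding ex using rhs R_def by simp
qed

end
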